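(* Let $\phi:\mathbb{N}_0\to\mathbb{N}_0$ satisfy $\phi(0)=0$ and $\phi(x)\neq x$ for all $x\in\mathbb{N}$, and let $n\ge 2$. Assume the local function $\phi_n$ has no cycle. Then: (1) $M_n(\phi)$ is nilpotent of degree at most $n$. (2) For every $k\ge1$ the power $M_n(\phi)^k$ is a binary ($\{0,1\}$-valued) matrix, $\#M_n(\phi)^k\le n-k$ for $1\le k\le n$, and $M_n(\phi)^k\cap M_n(\phi)^l=0$ for all $k\ne l$, $k,l\ge1$. (3) $\widehat{M}_n(\phi)$ is invertible and $\det\widehat{M}_n(\phi)=1$. (4) $\widehat{M}_n(\phi)^{-1}$ is a binary matrix with $\widehat{M}_n(\phi)^{-1}=I+M_n(\phi)+\cdots+M_n(\phi)^{n-1}$ and \[ \#\widehat{M}_n(\phi)^{-1}=n+\sum_{k=1}^{n-1}\#M_n(\phi)^k\le\binom{n+1}{2}. \]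
   Context: $\mathbb{N}=\{1,2,\dots\}$, $\mathbb{N}_0=\mathbb{N}\cup\{0\}$, $D_n=\{1,\dots,n\}$, $D_{n,0}=D_n\cup\{0\}$. The local function $\phi_n:D_{n,0}\to D_{n,0}$ is $\phi_n(x)=\phi(x)$ if $x\in D_n$ and $\phi(x)\in D_n$, and $\phi_n(x)=0$ otherwise. "$\phi_n$ has no cycle" means there are no $m\ge2$ and $x\in D_n$ with $\phi_n^m(x)=x$. For $1\le i\le n$, $\mathbf{e}_i$ is the $i$-th unit vector in $\mathbb{Z}^n$ and $\mathbf{e}_0$ is the zero vector. $M_n(\phi)$ is the $n\times n$ matrix whose $j$-th column is $\mathbf{e}_{\phi_n(j)}$, and $\widehat{M}_n(\phi)=I-M_n(\phi)$. For an $n\times n$ matrix $A$, $\#A$ is the number of nonzero entries of $A$ ($\#A^k$ means $\#(A^k)$). For $n\times n$ matrices $A,B$, $A\cap B$ denotes the number of index pairs $(i,j)$ with $A_{ij}B_{ij}\ne0$. A matrix $A$ is nilpotent of degree $k$ if $A^k=0$ and $A^{k-1}\neq 0$. *)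

theory Defs
  imports "Jordan_Normal_Form.Matrix" "Jordan_Normal_Form.Determinant"
begin

(* Matrices are Jordan_Normal_Form integer matrices; row/column indices are 0-based,
   so paper index i in D_n corresponds to matrix index i-1. *)

definition loc_fun :: "nat \<Rightarrow> (nat \<Rightarrow> nat) \<Rightarrow> nat \<Rightarrow> nat" where
  "loc_fun n \<phi> x = (if x \<in> {1..n} \<and> \<phi> x \<in> {1..n} then \<phi> x else 0)"

definition no_cycle :: "nat \<Rightarrow> (nat \<Rightarrow> nat) \<Rightarrow> bool" where
  "no_cycle n \<phi> \<longleftrightarrow> \<not> (\<exists>m\<ge>2. \<exists>x\<in>{1..n}. (loc_fun n \<phi> ^^ m) x = x)"

definition M_mat :: "nat \<Rightarrow> (nat \<Rightarrow> nat) \<Rightarrow> int mat" where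
  "M_mat n \<phi> = mat n n (\<lambda>(i, j). if loc_fun n \<phi> (j + 1) = i + 1 then 1 else 0)"

definition Mhat_mat :: "nat \<Rightarrow> (nat \<Rightarrow> nat) \<Rightarrow> int mat" where
  "Mhat_mat n \<phi> = 1\<^sub>m n - M_mat n \<phi>"

definition nnz :: "int mat \<Rightarrow> nat" where
  "nnz A = card {(i, j). i < dim_row A \<and> j < dim_col A \<and> A $$ (i, j) \<noteq> 0}"

definition mat_meet :: "int mat \<Rightarrow> int mat \<Rightarrow> nat" where
  "mat_meet A B = card {(i, j). i < dim_row A \<and> j < dim_col A \<and> A $$ (i, j) * B $$ (i, j) \<noteq> 0}"

definition binary_mat :: "int mat \<Rightarrow> bool" where
  "binary_mat A \<longleftrightarrow> (\<forall>i < dim_row A. \<forall>j < dim_col A. A $$ (i, j) \<in> {0, 1})"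

definition nilpotent_of_degree :: "int mat \<Rightarrow> nat \<Rightarrow> bool" where
  "nilpotent_of_degree A k \<longleftrightarrow>
     A ^\<^sub>m k = 0\<^sub>m (dim_row A) (dim_col A) \<and> A ^\<^sub>m (k - 1) \<noteq> 0\<^sub>m (dim_row A) (dim_col A)"

definition mat_sum :: "nat \<Rightarrow> (nat \<Rightarrow> int mat) \<Rightarrow> nat \<Rightarrow> int mat" where
  "mat_sum n A m = mat n n (\<lambda>(i, j). \<Sum>k<m. A k $$ (i, j))"

end

theory Submission
  imports Defs
begin

lemma loc_fun_0[simp]: "loc_fun n \<phi> 0 = 0"
  by (simp add: loc_fun_def)

lemma loc_fun_le: "loc_fun n \<phi> x \<le> n"
  by (simp add: loc_fun_def)

lemma funpow_loc_0[simp]: "(loc_fun n \<phi> ^^ k) 0 = 0"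
  by (induct k) auto

lemma funpow_loc_le: "x \<le> n \<Longrightarrow> (loc_fun n \<phi> ^^ k) x \<le> n"
  by (induct k) (auto simp: loc_fun_le)

lemma M_carrier[simp]: "M_mat n \<phi> \<in> carrier_mat n n"
  by (simp add: M_mat_def)

lemma M_dims[simp]: "dim_row (M_mat n \<phi>) = n" "dim_col (M_mat n \<phi>) = n"
  by (simp_all add: M_mat_def)

lemma powM_dims[simp]: "dim_row (M_mat n \<phi> ^\<^sub>m k) = n" "dim_col (M_mat n \<phi> ^\<^sub>m k) = n"
  by simp_all

lemma IM_carrier[simp]: "1\<^sub>m n - M_mat n \<phi> \<in> carrier_mat n n"
  by (rule minus_carrier_mat) simp

lemma powM: "M_mat n \<phi> ^\<^sub>m k = mat n n (\<lambda>(i, j). if (loc_fun n \<phi> ^^ k) (j + 1) = i + 1 then 1 else 0)"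
proof (induct k)
  case 0
  show ?case by (rule eq_matI) (auto simp: M_mat_def)
next
  case (Suc k)
  let ?f = "loc_fun n \<phi>"
  show ?case
  proof (rule eq_matI)
    fix i j assume i: "i < dim_row (mat n n (\<lambda>(i, j). if (?f ^^ Suc k) (j + 1) = i + 1 then 1 else (0::int)))"
      and j: "j < dim_col (mat n n (\<lambda>(i, j). if (?f ^^ Suc k) (j + 1) = i + 1 then 1 else (0::int)))"
    hence i: "i < n" and j: "j < n" by auto
    have "(M_mat n \<phi> ^\<^sub>m Suc k) $$ (i, j) = (\<Sum>l\<in>{0..<n}. (if (?f ^^ k) (l + 1) = i + 1 then 1 else 0) * (if ?f (j + 1) = l + 1 then 1 else (0::int)))"
      using i j unfolding pow_mat.simps Suc by (simp add: scalar_prod_def M_mat_def)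
    also have "\<dots> = (if (?f ^^ Suc k) (j + 1) = i + 1 then 1 else 0)"
    proof (cases "?f (j + 1) = 0")
      case True
      then show ?thesis by (simp add: funpow_Suc_right del: funpow.simps)
    next
      case False
      then obtain l0 where l0: "?f (j+1) = l0 + 1" by (metis Suc_eq_plus1 not0_implies_Suc)
      with loc_fun_le[of n \<phi> "j+1"] have "l0 < n" by simp
      have "(\<Sum>l\<in>{0..<n}. (if (?f ^^ k) (l + 1) = i + 1 then 1 else 0) * (if ?f (j + 1) = l + 1 then 1 else (0::int)))
          = (\<Sum>l\<in>{0..<n}. if l = l0 then (if (?f ^^ k) (l0 + 1) = i + 1 then 1 else 0) else 0)"
        using l0 by (intro sum.cong) auto
      also have "\<dots> = (if (?f ^^ k) (l0 + 1) = i + 1 then 1 else 0)" using \<open>l0 < n\<close> by simp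
      finally show ?thesis using l0 by (simp add: funpow_Suc_right del: funpow.simps)
    qed
    finally show "(M_mat n \<phi> ^\<^sub>m Suc k) $$ (i, j) = mat n n (\<lambda>(i, j). if (?f ^^ Suc k) (j + 1) = i + 1 then 1 else 0) $$ (i, j)"
      using i j by simp
  qed (auto simp: M_mat_def)
qed

lemma acyc:
  assumes ne: "\<And>x. x \<ge> 1 \<Longrightarrow> \<phi> x \<noteq> x" and nc: "no_cycle n \<phi>"
    and x: "x \<in> {1..n}" and k: "k \<ge> 1"
  shows "(loc_fun n \<phi> ^^ k) x \<noteq> x"
proof (cases "k = 1")
  case True
  then show ?thesis using ne[of x] x by (auto simp: loc_fun_def)
next
  case False
  then show ?thesis using nc k x unfolding no_cycle_def by auto
qed

lemma funpow_split: "a \<le> b \<Longrightarrow> (f ^^ b) x = (f ^^ (b - a)) ((f ^^ a) x)"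
proof -
  assume "a \<le> b"
  then obtain d where "b = d + a" by (metis le_add_diff_inverse2)
  then show ?thesis by (simp add: funpow_add)
qed

lemma funpow_zero_mono:
  assumes "(loc_fun n \<phi> ^^ a) x = 0" "a \<le> b"
  shows "(loc_fun n \<phi> ^^ b) x = 0"
proof -
  have "(loc_fun n \<phi> ^^ b) x = (loc_fun n \<phi> ^^ (b - a)) ((loc_fun n \<phi> ^^ a) x)"
    using assms(2) by (rule funpow_split)
  then show ?thesis using assms(1) by simp
qed

lemma term0:
  assumes ne: "\<And>x. x \<ge> 1 \<Longrightarrow> \<phi> x \<noteq> x" and nc: "no_cycle n \<phi>"
    and x: "x \<le> n"
  shows "(loc_fun n \<phi> ^^ n) x = 0"
proof (rule ccontr)
  let ?g = "\<lambda>k. (loc_fun n \<phi> ^^ k) x"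
  assume H: "?g n \<noteq> 0"
  have nz: "?g k \<noteq> 0" if "k \<le> n" for k
    using funpow_zero_mono[where a=k and x=x and b=n and n=n and \<phi>=\<phi>] H that by auto
  have sub: "?g ` {0..n} \<subseteq> {1..n}"
    using nz funpow_loc_le[OF x] by (auto simp: Suc_le_eq)
  have "\<not> inj_on ?g {0..n}"
  proof
    assume "inj_on ?g {0..n}"
    then have "card (?g ` {0..n}) = n + 1" by (simp add: card_image)
    moreover have "card (?g ` {0..n}) \<le> n" using card_mono[OF _ sub] by simp
    ultimately show False by simp
  qed
  then obtain a b where ab: "a \<le> n" "b \<le> n" "a \<noteq> b" "?g a = ?g b"
    unfolding inj_on_def by auto
  have "\<exists>a b. a < b \<and> b \<le> n \<and> ?g a = ?g b"
  proof (cases "a < b")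
    case True then show ?thesis using ab by blast
  next
    case False then show ?thesis using ab by (intro exI[of _ b] exI[of _ a]) auto
  qed
  then obtain a b where ab: "a < b" "b \<le> n" "?g a = ?g b" by blast
  have "(loc_fun n \<phi> ^^ (b - a)) (?g a) = ?g b"
    using ab by (intro funpow_split[symmetric]) simp
  then have "(loc_fun n \<phi> ^^ (b - a)) (?g a) = ?g a" using ab by simp
  moreover have "?g a \<in> {1..n}" using nz[of a] ab funpow_loc_le[OF x] by (auto simp: Suc_le_eq)
  moreover have "b - a \<ge> 1" using ab(1) by simp
  ultimately show False using acyc[OF ne nc, of "?g a" "b - a"] by blast
qed

lemma Tcard:
  assumes ne: "\<And>x. x \<ge> 1 \<Longrightarrow> \<phi> x \<noteq> x" and nc: "no_cycle n \<phi>"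
  shows "card {j. j < n \<and> (loc_fun n \<phi> ^^ k) (Suc j) \<noteq> 0} \<le> n - k"
proof (induct k)
  case 0
  then show ?case by simp
next
  case (Suc k)
  let ?f = "loc_fun n \<phi>"
  let ?T = "\<lambda>k. {j. j < n \<and> (?f ^^ k) (Suc j) \<noteq> 0}"
  have sub: "?T (Suc k) \<subseteq> ?T k"
  proof
    fix j assume "j \<in> ?T (Suc k)"
    then have j: "j < n" "?f ((?f ^^ k) (Suc j)) \<noteq> 0" by auto
    have "(?f ^^ k) (Suc j) \<noteq> 0"
    proof
      assume "(?f ^^ k) (Suc j) = 0"
      then show False using j(2) by simp
    qed
    then show "j \<in> ?T k" using j(1) by simp
  qed
  show ?case
  proof (cases "?T k = {}")
    case True
    then have e: "?T (Suc k) = {}" using sub by blast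
    show ?thesis by (subst e) simp
  next
    case False
    then obtain j where j: "j < n" "(?f ^^ k) (Suc j) \<noteq> 0" by auto
    let ?x = "Suc j"
    have t: "(?f ^^ n) ?x = 0" using term0[OF ne nc, of ?x] j by simp
    define t where "t = (LEAST t. (?f ^^ t) ?x = 0)"
    have t0: "(?f ^^ t) ?x = 0" unfolding t_def by (rule LeastI[of _ n], rule t)
    have tk: "t > k"
    proof (rule ccontr)
      assume "\<not> k < t"
      then show False using funpow_zero_mono[OF t0, of k] j by auto
    qed
    have t1: "(?f ^^ (t - 1)) ?x \<noteq> 0"
    proof
      assume "(?f ^^ (t - 1)) ?x = 0"
      then have "t \<le> t - 1" unfolding t_def by (rule Least_le)
      then show False using tk by simp
    qed
    define z where "z = (?f ^^ (t - Suc k)) ?x"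
    have zk: "(?f ^^ k) z = (?f ^^ (t - 1)) ?x"
      unfolding z_def using tk funpow_split[of "t - Suc k" "t - 1" ?f ?x] by simp
    have zk1: "(?f ^^ Suc k) z = (?f ^^ t) ?x"
      unfolding z_def using tk funpow_split[of "t - Suc k" "t" ?f ?x] by simp
    have z0: "z \<noteq> 0"
    proof
      assume "z = 0"
      with zk t1 show False by simp
    qed
    have zn: "z \<le> n" unfolding z_def using j by (intro funpow_loc_le) simp
    have sz: "Suc (z - 1) = z" using z0 by simp
    have "z - 1 < n" using z0 zn by simp
    moreover have "(?f ^^ k) (Suc (z - 1)) \<noteq> 0" unfolding sz zk by (rule t1)
    moreover have "(?f ^^ Suc k) (Suc (z - 1)) = 0" unfolding sz zk1 by (rule t0)
    ultimately have "z - 1 \<in> ?T k - ?T (Suc k)" by blast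
    then have "?T (Suc k) \<subset> ?T k" using sub by blast
    then have "card (?T (Suc k)) < card (?T k)"
      by (intro psubset_card_mono) auto
    then show ?thesis using Suc.hyps by linarith
  qed
qed

lemma nnz_ind:
  assumes le: "\<And>j. j < n \<Longrightarrow> g j \<le> n"
  shows "nnz (mat n n (\<lambda>(i, j). if g j = i + 1 then 1 else 0)) = card {j. j < n \<and> g j \<noteq> 0}"
proof -
  let ?A = "mat n n (\<lambda>(i, j). if g j = i + 1 then 1 else (0::int))"
  let ?S = "{j. j < n \<and> g j \<noteq> 0}"
  have "{(i, j). i < dim_row ?A \<and> j < dim_col ?A \<and> ?A $$ (i, j) \<noteq> 0}
      = (\<lambda>j. (g j - 1, j)) ` ?S"
  proof (intro equalityI subsetI)
    fix p assume "p \<in> {(i, j). i < dim_row ?A \<and> j < dim_col ?A \<and> ?A $$ (i, j) \<noteq> 0}"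
    then obtain i j where p: "p = (i, j)" "i < n" "j < n" "g j = i + 1" by (auto split: if_splits)
    then have "j \<in> ?S" "p = (g j - 1, j)" by auto
    then show "p \<in> (\<lambda>j. (g j - 1, j)) ` ?S" by blast
  next
    fix p assume "p \<in> (\<lambda>j. (g j - 1, j)) ` ?S"
    then obtain j where j: "p = (g j - 1, j)" "j < n" "g j \<noteq> 0" by blast
    have "g j - 1 < n" using le[OF j(2)] j(3) by linarith
    moreover have "g j = (g j - 1) + 1" using j(3) by simp
    ultimately show "p \<in> {(i, j). i < dim_row ?A \<and> j < dim_col ?A \<and> ?A $$ (i, j) \<noteq> 0}"
      using j by simp
  qed
  moreover have "inj_on (\<lambda>j. (g j - 1, j)) ?S" by (auto simp: inj_on_def)
  ultimately show ?thesis unfolding nnz_def by (simp add: card_image)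
qed


lemma gauss_aux:
  assumes "n \<ge> (1::nat)"
  shows "n + (\<Sum>k=1..n-1. n - k) = (n + 1) choose 2"
proof -
  have "(\<Sum>k=1..n-1. n - k) = (\<Sum>k=1..n-1. k)"
    using sum.atLeastAtMost_rev[of "\<lambda>k. k" 1 "n - 1"] assms by (simp add: algebra_simps)
  also have "\<dots> = \<Sum>{0..n-1}" using sum.atLeast_Suc_atMost[of 0 "n - 1" "\<lambda>k. k"] by simp
  also have "\<dots> = (n - 1) * n div 2" using gauss_sum_nat[of "n - 1"] assms by simp
  finally have e: "(\<Sum>k=1..n-1. n - k) = (n - 1) * n div 2" .
  have "(n + 1) choose 2 = (n + 1) * n div 2" by (simp add: choose_two)
  moreover have "even ((n - 1) * n)" by simp
  moreover have "(n + 1) * n = 2 * n + (n - 1) * n" using assms by (cases n) (auto simp: algebra_simps)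
  ultimately have c: "(n + 1) choose 2 = (2 * n + (n - 1) * n) div 2" by simp
  have d: "(2 * n + (n - 1) * n) div 2 = n + (n - 1) * n div 2"
    using div_mult_self1[of 2 "(n - 1) * n" n] by (simp add: algebra_simps)
  show ?thesis using e c d by simp
qed


lemma powM_entry: "i < n \<Longrightarrow> j < n \<Longrightarrow>
  (M_mat n \<phi> ^\<^sub>m k) $$ (i, j) = (if (loc_fun n \<phi> ^^ k) (j + 1) = i + 1 then 1 else 0)"
  by (simp add: powM)

lemma powdisj:
  assumes ne0: "\<forall>x. x \<ge> 1 \<longrightarrow> \<phi> x \<noteq> x" and nc: "no_cycle n \<phi>"
    and kl: "k < l" and i: "i < n"
    and a: "(loc_fun n \<phi> ^^ k) x = i + 1" and b: "(loc_fun n \<phi> ^^ l) x = i + 1"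
  shows False
proof -
  have "(loc_fun n \<phi> ^^ (l - k)) (i + 1) = i + 1"
    using funpow_split[of k l "loc_fun n \<phi>" x] kl a b by simp
  moreover have "l - k \<ge> 1" using kl by simp
  moreover have "i + 1 \<in> {1..n}" using i by simp
  moreover have ne: "\<And>x. x \<ge> 1 \<Longrightarrow> \<phi> x \<noteq> x" using ne0 by blast
  ultimately show False using acyc[OF ne nc] by blast
qed

lemma powM_n:
  assumes ne: "\<And>x. x \<ge> 1 \<Longrightarrow> \<phi> x \<noteq> x" and nc: "no_cycle n \<phi>"
  shows "M_mat n \<phi> ^\<^sub>m n = 0\<^sub>m n n"
proof (rule eq_matI)
  fix i j assume "i < dim_row (0\<^sub>m n n :: int mat)" "j < dim_col (0\<^sub>m n n :: int mat)"
  then have ij: "i < n" "j < n" by auto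
  have "(loc_fun n \<phi> ^^ n) (j + 1) = 0" using term0[OF ne nc, of "j + 1"] ij by simp
  then show "(M_mat n \<phi> ^\<^sub>m n) $$ (i, j) = 0\<^sub>m n n $$ (i, j)" using ij by (simp add: powM)
qed (auto simp: powM)

lemma pow_comm: "A \<in> carrier_mat m m \<Longrightarrow> A * A ^\<^sub>m k = A ^\<^sub>m Suc k"
proof (induct k)
  case 0
  then show ?case by simp
next
  case (Suc k)
  have "A * A ^\<^sub>m Suc k = A * (A ^\<^sub>m k * A)" by simp
  also have "\<dots> = (A * A ^\<^sub>m k) * A" using Suc.prems by (simp add: assoc_mult_mat[symmetric, of A m m _ m _ m])
  also have "\<dots> = A ^\<^sub>m Suc (Suc k)" using Suc by simp
  finally show ?case .
qed

definition Ssum :: "nat \<Rightarrow> (nat \<Rightarrow> nat) \<Rightarrow> nat \<Rightarrow> int mat" where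
  "Ssum n \<phi> m = mat_sum n (\<lambda>k. M_mat n \<phi> ^\<^sub>m k) m"

lemma Ssum_carrier[simp]: "Ssum n \<phi> m \<in> carrier_mat n n"
  by (simp add: Ssum_def mat_sum_def)

lemma Ssum_dims[simp]: "dim_row (Ssum n \<phi> m) = n" "dim_col (Ssum n \<phi> m) = n"
  by (simp_all add: Ssum_def mat_sum_def)

lemma Ssum_0: "Ssum n \<phi> 0 = 0\<^sub>m n n"
  by (rule eq_matI) (auto simp: Ssum_def mat_sum_def)

lemma Ssum_Suc: "Ssum n \<phi> (Suc m) = Ssum n \<phi> m + M_mat n \<phi> ^\<^sub>m m"
proof (rule eq_matI)
  fix i j assume "i < dim_row (Ssum n \<phi> m + M_mat n \<phi> ^\<^sub>m m)" "j < dim_col (Ssum n \<phi> m + M_mat n \<phi> ^\<^sub>m m)"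
  then have ij: "i < n" "j < n" by (simp_all only: index_add_mat powM_dims)
  then show "Ssum n \<phi> (Suc m) $$ (i, j) = (Ssum n \<phi> m + M_mat n \<phi> ^\<^sub>m m) $$ (i, j)"
    by (simp add: Ssum_def mat_sum_def)
qed (simp_all add: Ssum_def mat_sum_def)

lemma Ssum_left: "(1\<^sub>m n - M_mat n \<phi>) * Ssum n \<phi> m = 1\<^sub>m n - M_mat n \<phi> ^\<^sub>m m"
proof (induct m)
  case 0
  show ?case by (rule eq_matI) (auto simp: Ssum_0 scalar_prod_def)
next
  case (Suc m)
  let ?M = "M_mat n \<phi>"
  have c1: "1\<^sub>m n - ?M \<in> carrier_mat n n" by simp
  have "(1\<^sub>m n - ?M) * Ssum n \<phi> (Suc m) = (1\<^sub>m n - ?M) * Ssum n \<phi> m + (1\<^sub>m n - ?M) * ?M ^\<^sub>m m"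
    unfolding Ssum_Suc by (rule mult_add_distrib_mat[OF c1]) auto
  also have "(1\<^sub>m n - ?M) * ?M ^\<^sub>m m = ?M ^\<^sub>m m - ?M ^\<^sub>m Suc m"
    by (subst minus_mult_distrib_mat[of _ n n]) (auto simp: pow_comm[of _ n])
  finally show ?case unfolding Suc by (intro eq_matI) auto
qed

lemma Ssum_right: "Ssum n \<phi> m * (1\<^sub>m n - M_mat n \<phi>) = 1\<^sub>m n - M_mat n \<phi> ^\<^sub>m m"
proof (induct m)
  case 0
  show ?case by (rule eq_matI) (auto simp: Ssum_0 scalar_prod_def)
next
  case (Suc m)
  let ?M = "M_mat n \<phi>"
  have c1: "1\<^sub>m n - ?M \<in> carrier_mat n n" by simp
  have "Ssum n \<phi> (Suc m) * (1\<^sub>m n - ?M) = Ssum n \<phi> m * (1\<^sub>m n - ?M) + ?M ^\<^sub>m m * (1\<^sub>m n - ?M)"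
    unfolding Ssum_Suc by (rule add_mult_distrib_mat[OF _ _ c1]) auto
  also have "?M ^\<^sub>m m * (1\<^sub>m n - ?M) = ?M ^\<^sub>m m - ?M ^\<^sub>m Suc m"
    by (subst mult_minus_distrib_mat[of _ n n]) auto
  finally show ?case unfolding Suc by (intro eq_matI) auto
qed


lemma det_Mhat:
  assumes ne: "\<And>x. x \<ge> 1 \<Longrightarrow> \<phi> x \<noteq> x" and nc: "no_cycle n \<phi>"
  shows "det (Mhat_mat n \<phi>) = 1"
proof -
  let ?A = "Mhat_mat n \<phi>"
  let ?f = "loc_fun n \<phi>"
  have A: "?A \<in> carrier_mat n n" unfolding Mhat_mat_def by simp
  have entry: "?A $$ (i, j) = (if i = j then 1 else 0) - (if ?f (j + 1) = i + 1 then 1 else 0)"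
    if "i < n" "j < n" for i j
    using that by (simp add: Mhat_mat_def M_mat_def)
  have zero: "(\<Prod>i=0..<n. ?A $$ (i, p i)) = 0" if p: "p permutes {0..<n}" "p \<noteq> id" for p
  proof (rule ccontr)
    assume "(\<Prod>i=0..<n. ?A $$ (i, p i)) \<noteq> 0"
    then have nz: "?A $$ (i, p i) \<noteq> 0" if "i < n" for i using that by auto
    have pin: "p i < n" if "i < n" for i using permutes_in_image[OF p(1)] that by auto
    have key: "?f (p i + 1) = i + 1" if "i < n" "p i \<noteq> i" for i
    proof (rule ccontr)
      assume "?f (p i + 1) \<noteq> i + 1"
      then have "?A $$ (i, p i) = 0" using entry[OF that(1) pin[OF that(1)]] that(2) by simp
      then show False using nz[OF that(1)] by simp
    qed
    obtain i0 where i0: "p i0 \<noteq> i0" using p(2) by (auto simp: fun_eq_iff)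
    have i0n: "i0 < n" using permutes_not_in[OF p(1), of i0] i0 by auto
    have inj: "inj p" using permutes_inj[OF p(1)] .
    have inv: "(p ^^ m) i0 < n \<and> p ((p ^^ m) i0) \<noteq> (p ^^ m) i0 \<and> (?f ^^ m) ((p ^^ m) i0 + 1) = i0 + 1" for m
    proof (induct m)
      case 0
      then show ?case using i0 i0n by simp
    next
      case (Suc m)
      let ?y = "(p ^^ m) i0"
      have y: "?y < n" "p ?y \<noteq> ?y" "(?f ^^ m) (?y + 1) = i0 + 1" using Suc by auto
      have e: "(p ^^ Suc m) i0 = p ?y" by simp
      have a: "p ?y < n" using pin[OF y(1)] .
      have b: "p (p ?y) \<noteq> p ?y"
      proof
        assume "p (p ?y) = p ?y"
        then have "p ?y = ?y" using inj by (simp add: inj_eq)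
        then show False using y(2) by simp
      qed
      have c: "(?f ^^ Suc m) (p ?y + 1) = i0 + 1"
        using key[OF y(1) y(2)] y(3) by (simp add: funpow_Suc_right del: funpow.simps)
      show ?case unfolding e using a b c by blast
    qed
    have "(?f ^^ n) ((p ^^ n) i0 + 1) = i0 + 1" using inv by blast
    moreover have "(?f ^^ n) ((p ^^ n) i0 + 1) = 0"
      using term0[OF ne nc, of "(p ^^ n) i0 + 1"] inv[of n] by simp
    ultimately show False by simp
  qed
  let ?P = "{p. p permutes {0..<n}}"
  let ?g = "\<lambda>p. signof p * (\<Prod>i=0..<n. ?A $$ (i, p i))"
  have fin: "finite ?P" using finite_permutations[of "{0..<n}"] by simp
  have idP: "id \<in> ?P" by simp
  have "det ?A = sum ?g ?P" by (rule det_def'[OF A])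
  also have "\<dots> = ?g id + sum ?g (?P - {id})" by (rule sum.remove[OF fin idP])
  also have "sum ?g (?P - {id}) = 0" using zero by (intro sum.neutral) auto
  also have "(\<Prod>i=0..<n. ?A $$ (i, id i)) = 1"
  proof (rule prod.neutral, rule ballI)
    fix i assume "i \<in> {0..<n}"
    then have i: "i < n" by simp
    have "(?f ^^ 1) (i + 1) \<noteq> i + 1" using acyc[OF ne nc, of "i + 1" 1] i by simp
    then show "?A $$ (i, id i) = 1" using entry[OF i i] by simp
  qed
  finally show ?thesis by (simp add: signof_id)
qed


lemma Ssum_entry: "i < n \<Longrightarrow> j < n \<Longrightarrow>
  Ssum n \<phi> m $$ (i, j) = (\<Sum>k<m. if (loc_fun n \<phi> ^^ k) (j + 1) = i + 1 then 1 else 0)"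
  by (simp add: Ssum_def mat_sum_def powM_entry)

lemma Ssum_entry_cases:
  assumes ne: "\<And>x. x \<ge> 1 \<Longrightarrow> \<phi> x \<noteq> x" and nc: "no_cycle n \<phi>"
    and i: "i < n" and j: "j < n"
  shows "(Ssum n \<phi> n $$ (i, j) = 1 \<and> (\<exists>k<n. (loc_fun n \<phi> ^^ k) (j + 1) = i + 1))
       \<or> (Ssum n \<phi> n $$ (i, j) = 0 \<and> \<not> (\<exists>k<n. (loc_fun n \<phi> ^^ k) (j + 1) = i + 1))"
proof (cases "\<exists>k<n. (loc_fun n \<phi> ^^ k) (j + 1) = i + 1")
  case True
  have ne': "\<forall>x. x \<ge> 1 \<longrightarrow> \<phi> x \<noteq> x" using ne by blast
  from True obtain k0 where k0: "k0 < n" "(loc_fun n \<phi> ^^ k0) (j + 1) = i + 1" by blast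
  have uniq: "k = k0" if kk: "(loc_fun n \<phi> ^^ k) (j + 1) = i + 1" for k
  proof (rule ccontr)
    assume "k \<noteq> k0"
    then consider (lt) "k < k0" | (gt) "k0 < k" by linarith
    then show False
    proof cases
      case lt then show False using powdisj[OF ne' nc lt i kk k0(2)] by simp
    next
      case gt then show False using powdisj[OF ne' nc gt i k0(2) kk] by simp
    qed
  qed
  have "Ssum n \<phi> n $$ (i, j) = (\<Sum>k<n. if k = k0 then 1 else 0)"
    unfolding Ssum_entry[OF i j]
  proof (rule sum.cong)
    fix k assume "k \<in> {..<n}"
    show "(if (loc_fun n \<phi> ^^ k) (j + 1) = i + 1 then 1 else 0) = (if k = k0 then 1 else (0::int))"
    proof (cases "k = k0")
      case True then show ?thesis using k0(2) by simp
    next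
      case False
      then have "(loc_fun n \<phi> ^^ k) (j + 1) \<noteq> i + 1" using uniq by blast
      then show ?thesis using False by simp
    qed
  qed simp
  also have "\<dots> = 1" using k0(1) by simp
  finally show ?thesis using True by blast
next
  case False
  then have "Ssum n \<phi> n $$ (i, j) = 0" unfolding Ssum_entry[OF i j] by (intro sum.neutral) auto
  then show ?thesis using False by blast
qed

lemma nnz_Ssum:
  assumes ne: "\<And>x. x \<ge> 1 \<Longrightarrow> \<phi> x \<noteq> x" and nc: "no_cycle n \<phi>"
  shows "nnz (Ssum n \<phi> n) = (\<Sum>k<n. nnz (M_mat n \<phi> ^\<^sub>m k))"
proof -
  have ne': "\<forall>x. x \<ge> 1 \<longrightarrow> \<phi> x \<noteq> x" using ne by blast
  let ?Z = "\<lambda>k. {(i, j). i < n \<and> j < n \<and> (M_mat n \<phi> ^\<^sub>m k) $$ (i, j) \<noteq> 0}"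
  have e1: "nnz (M_mat n \<phi> ^\<^sub>m k) = card (?Z k)" for k unfolding nnz_def by simp
  have "{(i, j). i < dim_row (Ssum n \<phi> n) \<and> j < dim_col (Ssum n \<phi> n) \<and> Ssum n \<phi> n $$ (i, j) \<noteq> 0}
      = (\<Union>k\<in>{..<n}. ?Z k)"
  proof (intro equalityI subsetI)
    fix p assume "p \<in> {(i, j). i < dim_row (Ssum n \<phi> n) \<and> j < dim_col (Ssum n \<phi> n) \<and> Ssum n \<phi> n $$ (i, j) \<noteq> 0}"
    then obtain i j where p: "p = (i, j)" "i < n" "j < n" "Ssum n \<phi> n $$ (i, j) \<noteq> 0"
      by auto
    then obtain k where "k < n" "(loc_fun n \<phi> ^^ k) (j + 1) = i + 1"
      using Ssum_entry_cases[OF ne nc p(2) p(3)] by auto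
    then show "p \<in> (\<Union>k\<in>{..<n}. ?Z k)" using p by (auto simp: powM_entry)
  next
    fix p assume "p \<in> (\<Union>k\<in>{..<n}. ?Z k)"
    then obtain k i j where p: "p = (i, j)" "k < n" "i < n" "j < n" "(M_mat n \<phi> ^\<^sub>m k) $$ (i, j) \<noteq> 0" by blast
    then have "(loc_fun n \<phi> ^^ k) (j + 1) = i + 1" by (simp add: powM_entry split: if_splits)
    then have "Ssum n \<phi> n $$ (i, j) = 1" using Ssum_entry_cases[OF ne nc p(3) p(4)] p(2) by auto
    then show "p \<in> {(i, j). i < dim_row (Ssum n \<phi> n) \<and> j < dim_col (Ssum n \<phi> n) \<and> Ssum n \<phi> n $$ (i, j) \<noteq> 0}"
      using p by auto
  qed
  then have "nnz (Ssum n \<phi> n) = card (\<Union>k\<in>{..<n}. ?Z k)" unfolding nnz_def by simp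
  also have "\<dots> = (\<Sum>k<n. card (?Z k))"
  proof (rule card_UN_disjoint)
    show "finite {..<n}" by simp
    show "\<forall>k\<in>{..<n}. finite (?Z k)"
    proof
      fix k :: nat
      have "?Z k \<subseteq> {..<n} \<times> {..<n}" by auto
      then show "finite (?Z k)" by (rule finite_subset) simp
    qed
    show "\<forall>k\<in>{..<n}. \<forall>l\<in>{..<n}. k \<noteq> l \<longrightarrow> ?Z k \<inter> ?Z l = {}"
    proof (intro ballI impI)
      fix k l :: nat assume "k \<noteq> l"
      show "?Z k \<inter> ?Z l = {}"
      proof (rule ccontr)
        assume "?Z k \<inter> ?Z l \<noteq> {}"
        then obtain i j where ij: "i < n" "j < n" "(loc_fun n \<phi> ^^ k) (j + 1) = i + 1" "(loc_fun n \<phi> ^^ l) (j + 1) = i + 1"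
          by (auto simp: powM_entry split: if_splits)
        from \<open>k \<noteq> l\<close> consider (lt) "k < l" | (gt) "l < k" by linarith
        then show False
        proof cases
          case lt then show False using powdisj[OF ne' nc lt ij(1) ij(3) ij(4)] by simp
        next
          case gt then show False using powdisj[OF ne' nc gt ij(1) ij(4) ij(3)] by simp
        qed
      qed
    qed
  qed
  finally show ?thesis using e1 by simp
qed


lemma nnz_pow: "nnz (M_mat n \<phi> ^\<^sub>m k) = card {j. j < n \<and> (loc_fun n \<phi> ^^ k) (Suc j) \<noteq> 0}"
proof -
  have "nnz (mat n n (\<lambda>(i, j). if (\<lambda>j. (loc_fun n \<phi> ^^ k) (j + 1)) j = i + 1 then 1 else 0))
      = card {j. j < n \<and> (\<lambda>j. (loc_fun n \<phi> ^^ k) (j + 1)) j \<noteq> 0}"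
    by (rule nnz_ind) (simp add: funpow_loc_le)
  then show ?thesis by (simp add: powM)
qed

theorem theorem1p5:
  fixes \<phi> :: "nat \<Rightarrow> nat" and n :: nat
  assumes "\<phi> 0 = 0"
    and "\<And>x. x \<ge> 1 \<Longrightarrow> \<phi> x \<noteq> x"
    and "n \<ge> 2"
    and "no_cycle n \<phi>"
  shows "(\<exists>k \<le> n. k \<ge> 1 \<and> nilpotent_of_degree (M_mat n \<phi>) k)
    \<and> (\<forall>k \<ge> 1. binary_mat (M_mat n \<phi> ^\<^sub>m k))
    \<and> (\<forall>k. 1 \<le> k \<and> k \<le> n \<longrightarrow> nnz (M_mat n \<phi> ^\<^sub>m k) \<le> n - k)
    \<and> (\<forall>k l. k \<ge> 1 \<and> l \<ge> 1 \<and> k \<noteq> l \<longrightarrow>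
          mat_meet (M_mat n \<phi> ^\<^sub>m k) (M_mat n \<phi> ^\<^sub>m l) = 0)
    \<and> invertible_mat (Mhat_mat n \<phi>) \<and> det (Mhat_mat n \<phi>) = 1
    \<and> (let Minv = mat_sum n (\<lambda>k. M_mat n \<phi> ^\<^sub>m k) n in
         inverts_mat (Mhat_mat n \<phi>) Minv \<and> inverts_mat Minv (Mhat_mat n \<phi>)
         \<and> binary_mat Minv
         \<and> nnz Minv = n + (\<Sum>k=1..n-1. nnz (M_mat n \<phi> ^\<^sub>m k))
         \<and> nnz Minv \<le> (n + 1) choose 2)"
proof -
  note ne = assms(2) and nc = assms(4)
  have ne': "\<forall>x. x \<ge> 1 \<longrightarrow> \<phi> x \<noteq> x" using ne by blast
  have n1: "n \<ge> 1" using assms(3) by simp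
  let ?M = "M_mat n \<phi>"
  let ?f = "loc_fun n \<phi>"
  have Mn: "?M ^\<^sub>m n = 0\<^sub>m n n" by (rule powM_n[OF ne nc])
  define K where "K = (LEAST k. ?M ^\<^sub>m k = 0\<^sub>m n n)"
  have K0: "?M ^\<^sub>m K = 0\<^sub>m n n" unfolding K_def by (rule LeastI[of _ n], rule Mn)
  have Kn: "K \<le> n" unfolding K_def by (rule Least_le, rule Mn)
  have M0: "?M ^\<^sub>m 0 \<noteq> 0\<^sub>m n n"
  proof
    assume "?M ^\<^sub>m 0 = 0\<^sub>m n n"
    then have "(?M ^\<^sub>m 0) $$ (0, 0) = (0\<^sub>m n n :: int mat) $$ (0, 0)" by simp
    then show False using n1 by simp
  qed
  have K1: "K \<ge> 1"
  proof (rule ccontr)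
    assume "\<not> K \<ge> 1"
    then have "K = 0" by simp
    then show False using K0 M0 by simp
  qed
  have KK: "?M ^\<^sub>m (K - 1) \<noteq> 0\<^sub>m n n"
  proof
    assume "?M ^\<^sub>m (K - 1) = 0\<^sub>m n n"
    then have "K \<le> K - 1" unfolding K_def by (rule Least_le)
    then show False using K1 by simp
  qed
  have P1: "\<exists>k \<le> n. k \<ge> 1 \<and> nilpotent_of_degree ?M k"
    using K0 KK Kn K1 unfolding nilpotent_of_degree_def by auto
  have P2: "\<forall>k \<ge> 1. binary_mat (?M ^\<^sub>m k)"
    by (auto simp: binary_mat_def powM_entry)
  have P3: "\<forall>k. 1 \<le> k \<and> k \<le> n \<longrightarrow> nnz (?M ^\<^sub>m k) \<le> n - k"
    using Tcard[OF ne nc] by (simp add: nnz_pow)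
  have P4: "\<forall>k l. k \<ge> 1 \<and> l \<ge> 1 \<and> k \<noteq> l \<longrightarrow> mat_meet (?M ^\<^sub>m k) (?M ^\<^sub>m l) = 0"
  proof (intro allI impI)
    fix k l :: nat assume kl: "k \<ge> 1 \<and> l \<ge> 1 \<and> k \<noteq> l"
    have "{(i, j). i < dim_row (?M ^\<^sub>m k) \<and> j < dim_col (?M ^\<^sub>m k) \<and> (?M ^\<^sub>m k) $$ (i, j) * (?M ^\<^sub>m l) $$ (i, j) \<noteq> 0} = {}"
    proof (rule ccontr)
      assume "{(i, j). i < dim_row (?M ^\<^sub>m k) \<and> j < dim_col (?M ^\<^sub>m k) \<and> (?M ^\<^sub>m k) $$ (i, j) * (?M ^\<^sub>m l) $$ (i, j) \<noteq> 0} \<noteq> {}"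
      then obtain i j where ij: "i < n" "j < n" "(?f ^^ k) (j + 1) = i + 1" "(?f ^^ l) (j + 1) = i + 1"
        by (auto simp: powM_entry split: if_splits)
      from kl consider (lt) "k < l" | (gt) "l < k" by linarith
      then show False
      proof cases
        case lt then show False using powdisj[OF ne' nc lt ij(1) ij(3) ij(4)] by simp
      next
        case gt then show False using powdisj[OF ne' nc gt ij(1) ij(4) ij(3)] by simp
      qed
    qed
    then show "mat_meet (?M ^\<^sub>m k) (?M ^\<^sub>m l) = 0" unfolding mat_meet_def by (simp only: card.empty)
  qed
  have H: "Mhat_mat n \<phi> = 1\<^sub>m n - ?M" by (simp add: Mhat_mat_def)
  have one_zero: "1\<^sub>m n - 0\<^sub>m n n = (1\<^sub>m n :: int mat)" by (rule eq_matI) auto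
  have L: "Mhat_mat n \<phi> * Ssum n \<phi> n = 1\<^sub>m n" unfolding H Ssum_left Mn one_zero ..
  have R: "Ssum n \<phi> n * Mhat_mat n \<phi> = 1\<^sub>m n" unfolding H Ssum_right Mn one_zero ..
  have dH: "dim_row (Mhat_mat n \<phi>) = n" "dim_col (Mhat_mat n \<phi>) = n" unfolding H by simp_all
  have P5: "inverts_mat (Mhat_mat n \<phi>) (Ssum n \<phi> n)" unfolding inverts_mat_def dH L ..
  have P6: "inverts_mat (Ssum n \<phi> n) (Mhat_mat n \<phi>)" unfolding inverts_mat_def Ssum_dims R ..
  have P7: "invertible_mat (Mhat_mat n \<phi>)"
    unfolding invertible_mat_def square_mat.simps using P5 P6 dH by auto
  have P8: "det (Mhat_mat n \<phi>) = 1" by (rule det_Mhat[OF ne nc])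
  have P9: "binary_mat (Ssum n \<phi> n)"
    unfolding binary_mat_def using Ssum_entry_cases[OF ne nc] by auto
  have sp: "{..<n} = insert 0 {1..n-1}" using n1 by auto
  have nnz0: "nnz (?M ^\<^sub>m 0) = n"
  proof -
    have "{j. j < n \<and> (?f ^^ 0) (Suc j) \<noteq> 0} = {..<n}" by auto
    then show ?thesis by (simp only: nnz_pow) simp
  qed
  have "nnz (Ssum n \<phi> n) = (\<Sum>k\<in>{..<n}. nnz (?M ^\<^sub>m k))" by (rule nnz_Ssum[OF ne nc])
  also have "\<dots> = (\<Sum>k\<in>insert 0 {1..n-1}. nnz (?M ^\<^sub>m k))" by (simp only: sp)
  also have "\<dots> = nnz (?M ^\<^sub>m 0) + (\<Sum>k=1..n-1. nnz (?M ^\<^sub>m k))" by (rule sum.insert) auto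
  finally have P10: "nnz (Ssum n \<phi> n) = n + (\<Sum>k=1..n-1. nnz (?M ^\<^sub>m k))" by (simp only: nnz0)
  have "(\<Sum>k=1..n-1. nnz (?M ^\<^sub>m k)) \<le> (\<Sum>k=1..n-1. n - k)"
  proof (rule sum_mono)
    fix k assume "k \<in> {1..n-1}"
    then show "nnz (?M ^\<^sub>m k) \<le> n - k" using P3 by auto
  qed
  then have P11: "nnz (Ssum n \<phi> n) \<le> (n + 1) choose 2"
    using P10 gauss_aux[OF n1] by linarith
  have Seq: "mat_sum n (\<lambda>k. M_mat n \<phi> ^\<^sub>m k) n = Ssum n \<phi> n" by (simp add: Ssum_def)
  show ?thesis unfolding Let_def Seq
    by (intro conjI) fact+
qed

end
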